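(* Consider binary floating-point arithmetic with precision $p\ge 2$ and unit round-off $u=2^{-p}$, all operations correctly rounded to nearest ($\mathrm{RN}$), and assume no underflow or overflow occurs. For floating-point inputs $x,y$, consider the algorithm: if $|x|<|y|$ swap $x$ and $y$; then $r\gets \mathrm{RN}(y/x)$, $t\gets \mathrm{RN}(1+r^2)$, $s\gets\mathrm{RN}(\sqrt t)$, $\rho_2\gets \mathrm{RN}(|x|\cdot s)$. Then the relative error $|\rho_2/\sqrt{x^2+y^2}-1|$ is less than or equal to \[ R_5(u) = \frac{(1+2u)\sqrt{1+u}-1+2u^2}{1+u} \le \frac52 u + \frac38 u^2. \]
   Context: A radix-2 floating-point number of precision $p$ has the form $M\cdot 2^{e-p+1}$ with integers $|M|\le 2^p-1$ and $e_{\min}\le e\le e_{\max}$. $\mathrm{RN}$ is rounding to nearest (ties-to-even). "No underflow or overflow" means all nonzero intermediate results lie in the normal range $[2^{e_{\min}}, (2^p-1)2^{e_{\max}-p+1}]$ in absolute value. *)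

theory Defs
  imports Complex_Main
begin

definition is_float :: "nat \<Rightarrow> int \<Rightarrow> int \<Rightarrow> real \<Rightarrow> bool" where
  "is_float p emin emax x \<longleftrightarrow>
     (\<exists>M e :: int. x = real_of_int M * 2 powr real_of_int (e - int p + 1)
        \<and> \<bar>M\<bar> \<le> 2 ^ p - 1 \<and> emin \<le> e \<and> e \<le> emax)"

text \<open>Unbounded-exponent precision-p floating-point numbers (used for rounding;
  under the no-underflow/no-overflow hypothesis this coincides with the bounded format).\<close>
definition is_fp :: "nat \<Rightarrow> real \<Rightarrow> bool" where
  "is_fp p x \<longleftrightarrow> (\<exists>M e :: int. x = real_of_int M * 2 powr real_of_int e \<and> \<bar>M\<bar> < 2 ^ p)"

definition even_fp :: "nat \<Rightarrow> real \<Rightarrow> bool" where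
  "even_fp p x \<longleftrightarrow> (\<exists>M e :: int. x = real_of_int M * 2 powr real_of_int e
      \<and> 2 ^ (p - 1) \<le> \<bar>M\<bar> \<and> \<bar>M\<bar> < 2 ^ p \<and> even M)"

text \<open>Round to nearest, ties to even.\<close>
definition RN :: "nat \<Rightarrow> real \<Rightarrow> real" where
  "RN p x = (THE f. is_fp p f \<and> (\<forall>g. is_fp p g \<longrightarrow> \<bar>x - f\<bar> \<le> \<bar>x - g\<bar>)
      \<and> ((\<forall>g. is_fp p g \<and> \<bar>x - g\<bar> = \<bar>x - f\<bar> \<longrightarrow> g = f) \<or> even_fp p f))"

definition no_uf_of :: "nat \<Rightarrow> int \<Rightarrow> int \<Rightarrow> real \<Rightarrow> bool" where
  "no_uf_of p emin emax z \<longleftrightarrow> z = 0 \<or>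
     (2 powr real_of_int emin \<le> \<bar>z\<bar> \<and> \<bar>z\<bar> \<le> (2 ^ p - 1) * 2 powr real_of_int (emax - int p + 1))"

definition R5 :: "real \<Rightarrow> real" where
  "R5 u = ((1 + 2*u) * sqrt (1 + u) - 1 + 2*u^2) / (1 + u)"

end

theory Submission
  imports Defs
begin

lemma fp_neg: "is_fp p (-x) \<longleftrightarrow> is_fp p x"
proof -
  have *: "is_fp p (-x)" if "is_fp p x" for x
  proof -
    from that obtain M e where "x = real_of_int M * 2 powr real_of_int e" "\<bar>M\<bar> < 2 ^ p"
      unfolding is_fp_def by blast
    then show ?thesis unfolding is_fp_def
      by (intro exI[of _ "-M"] exI[of _ e]) auto
  qed
  show ?thesis using *[of x] *[of "-x"] by auto
qed

lemma even_fp_neg: "even_fp p (-x) \<longleftrightarrow> even_fp p x"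
proof -
  have *: "even_fp p (-x)" if "even_fp p x" for x
  proof -
    from that obtain M e where "x = real_of_int M * 2 powr real_of_int e" "2 ^ (p - 1) \<le> \<bar>M\<bar>"
       "\<bar>M\<bar> < 2 ^ p" "even M"
      unfolding even_fp_def by blast
    then show ?thesis unfolding even_fp_def
      by (intro exI[of _ "-M"] exI[of _ e]) auto
  qed
  show ?thesis using *[of x] *[of "-x"] by auto
qed

lemma fp_zero: "is_fp p 0"
  unfolding is_fp_def by (intro exI[of _ 0] exI[of _ 0]) auto

lemma fp_intro:
  assumes "p \<ge> 1" "\<bar>N\<bar> \<le> 2 ^ p"
  shows "is_fp p (real_of_int N * 2 powr real_of_int e)"
proof (cases "\<bar>N\<bar> < 2 ^ p")
  case True
  then show ?thesis unfolding is_fp_def by blast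
next
  case False
  with assms have N: "\<bar>N\<bar> = 2 ^ p" by auto
  have ev: "N = 2 * (N div 2)"
  proof -
    have "even (\<bar>N\<bar>)" using N assms by (simp add: even_power)
    then show ?thesis by simp
  qed
  have "\<bar>N div 2\<bar> = 2 ^ (p - 1)"
  proof -
    have "2 * \<bar>N div 2\<bar> = \<bar>N\<bar>" using ev by (metis abs_mult abs_numeral)
    also have "\<dots> = 2 * 2 ^ (p - 1)" using N assms by (simp add: power_eq_if)
    finally show ?thesis by simp
  qed
  hence lt: "\<bar>N div 2\<bar> < 2 ^ p" using assms
    by (metis diff_less less_numeral_extra(1) one_less_numeral_iff power_strict_increasing_iff semiring_norm(76) zero_less_one le_less_trans less_le_trans order_refl)
  have "real_of_int N * 2 powr real_of_int e = real_of_int (N div 2) * 2 powr real_of_int (e + 1)"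
  proof -
    have "real_of_int N = 2 * real_of_int (N div 2)" using ev by (metis of_int_mult of_int_numeral)
    moreover have "(2::real) powr real_of_int (e + 1) = 2 powr real_of_int e * 2"
      by (simp add: powr_add)
    ultimately show ?thesis by simp
  qed
  then show ?thesis unfolding is_fp_def using lt by blast
qed


lemma exp_exists:
  fixes x :: real assumes "x > 0"
  shows "\<exists>n::int. 2 powr real_of_int n \<le> x \<and> x < 2 powr real_of_int (n + 1)"
proof -
  define n where "n = \<lfloor>log 2 x\<rfloor>"
  have "2 powr real_of_int n \<le> 2 powr (log 2 x)"
    unfolding n_def by (intro powr_mono) auto
  moreover have "2 powr (log 2 x) < 2 powr real_of_int (n + 1)"
    unfolding n_def by (intro powr_less_mono) linarith+
  ultimately show ?thesis using assms by auto
qed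

lemma powr_int_split:
  fixes e E :: int assumes "E \<le> e"
  shows "(2::real) powr real_of_int e = real_of_int (2 ^ nat (e - E)) * 2 powr real_of_int E"
proof -
  have "(2::real) powr real_of_int e = 2 powr (real_of_int (e - E) + real_of_int E)" by simp
  also have "\<dots> = 2 powr real_of_int (e - E) * 2 powr real_of_int E" by (simp only: powr_add)
  also have "2 powr real_of_int (e - E) = (2::real) ^ nat (e - E)"
    using assms by (simp add: powr_realpow[symmetric])
  finally show ?thesis by simp
qed

lemma norm_unique:
  fixes M M' e e' :: int
  assumes "real_of_int M * 2 powr real_of_int e = real_of_int M' * 2 powr real_of_int e'"
    and "2 ^ (p - 1) \<le> \<bar>M\<bar>" "\<bar>M\<bar> < 2 ^ p" "2 ^ (p - 1) \<le> \<bar>M'\<bar>" "\<bar>M'\<bar> < 2 ^ p" "p \<ge> 1"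
  shows "M = M' \<and> e = e'"
proof -
  have key: "e \<le> e'" if "real_of_int M * 2 powr real_of_int e = real_of_int M' * 2 powr real_of_int e'"
    "2 ^ (p - 1) \<le> \<bar>M\<bar>" "\<bar>M'\<bar> < 2 ^ p" for M M' e e' :: int
  proof (rule ccontr)
    assume "\<not> e \<le> e'"
    hence le: "e' \<le> e" and ne: "nat (e - e') \<ge> 1" by auto
    have "real_of_int M * 2 powr real_of_int e = real_of_int (M * 2 ^ nat (e - e')) * 2 powr real_of_int e'"
      using powr_int_split[OF le] by simp
    with that(1) have "real_of_int (M * 2 ^ nat (e - e')) = real_of_int M'" by simp
    hence eq: "M * 2 ^ nat (e - e') = M'" by linarith
    have p2: "(2::int) ^ nat (e - e') \<ge> 2 ^ 1" by (rule power_increasing[OF ne]) simp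
    have "\<bar>M'\<bar> = \<bar>M\<bar> * 2 ^ nat (e - e')" using eq[symmetric] by (simp add: abs_mult)
    hence "\<bar>M'\<bar> \<ge> \<bar>M\<bar> * 2" using p2 by (simp add: mult_left_mono)
    moreover have "2 ^ p \<le> 2 ^ (p - 1) * (2::int)" using \<open>p \<ge> 1\<close>
      by (metis (mono_tags) One_nat_def Suc_pred le_eq_less_or_eq mult.commute neq0_conv not_one_le_zero power_Suc order_refl)
    ultimately show False using that by linarith
  qed
  have "e \<le> e'" using key[of M e M' e'] assms by auto
  moreover have "e' \<le> e" using key[of M' e' M e] assms by auto
  ultimately have "e = e'" by simp
  with assms(1) show ?thesis by simp
qed


definition rnP :: "nat \<Rightarrow> real \<Rightarrow> real \<Rightarrow> bool" where
  "rnP p x f \<longleftrightarrow> is_fp p f \<and> (\<forall>g. is_fp p g \<longrightarrow> \<bar>x - f\<bar> \<le> \<bar>x - g\<bar>)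
      \<and> ((\<forall>g. is_fp p g \<and> \<bar>x - g\<bar> = \<bar>x - f\<bar> \<longrightarrow> g = f) \<or> even_fp p f)"

lemma RN_rnP: "RN p x = (THE f. rnP p x f)"
  unfolding RN_def rnP_def by simp

lemma binade:
  fixes x :: real assumes "x > 0"
  obtains E :: int where "2 ^ (p - 1) \<le> x / 2 powr real_of_int E" "x / 2 powr real_of_int E < 2 ^ p" "p \<ge> 1"
  | "p = 0"
proof (cases "p = 0")
  case True then show ?thesis using that by simp
next
  case False
  obtain n :: int where n: "2 powr real_of_int n \<le> x" "x < 2 powr real_of_int (n + 1)"
    using exp_exists[OF assms] by blast
  define E where "E = n - int p + 1"
  have pos: "(2::real) powr real_of_int E > 0" by simp
  have "2 powr real_of_int n = 2 powr real_of_int (int (p - 1)) * 2 powr real_of_int E"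
    unfolding E_def using False by (simp add: powr_add[symmetric] of_nat_diff)
  also have "2 powr real_of_int (int (p - 1)) = (2::real) ^ (p - 1)" by (simp add: powr_realpow)
  finally have a: "2 powr real_of_int n = 2 ^ (p - 1) * 2 powr real_of_int E" .
  have "2 powr real_of_int (n + 1) = 2 powr real_of_int (int p) * 2 powr real_of_int E"
    unfolding E_def by (simp add: powr_add[symmetric])
  also have "2 powr real_of_int (int p) = (2::real) ^ p" by (simp add: powr_realpow)
  finally have b: "2 powr real_of_int (n + 1) = 2 ^ p * 2 powr real_of_int E" .
  show ?thesis
  proof (rule that(1)[of E])
    show "2 ^ (p - 1) \<le> x / 2 powr real_of_int E" using n(1) a pos by (simp add: pos_le_divide_eq)
    show "x / 2 powr real_of_int E < 2 ^ p" using n(2) b pos by (simp add: pos_divide_less_eq)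
  qed (use False in auto)
qed

lemma gap:
  fixes m E :: int
  assumes "2 ^ (p - 1) \<le> m" "p \<ge> 1" "is_fp p g"
    and "real_of_int m * 2 powr real_of_int E < g" "g < real_of_int (m + 1) * 2 powr real_of_int E"
  shows False
proof -
  obtain M e where g: "g = real_of_int M * 2 powr real_of_int e" "\<bar>M\<bar> < 2 ^ p"
    using assms(3) unfolding is_fp_def by blast
  have pE: "(2::real) powr real_of_int E > 0" by simp
  have mpos: "real_of_int m * 2 powr real_of_int E > 0"
  proof -
    have "(0::int) < 2 ^ (p - 1)" by simp
    hence "m > 0" using assms(1) by linarith
    thus ?thesis using pE by simp
  qed
  show False
  proof (cases "e < E")
    case True
    have "(2::real) powr real_of_int e \<le> 2 powr real_of_int (E - 1)"
      using True by (intro powr_mono) auto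
    also have "\<dots> = 2 powr real_of_int E / 2" by (simp add: powr_diff)
    finally have ee: "(2::real) powr real_of_int e \<le> 2 powr real_of_int E / 2" .
    have "g \<le> \<bar>real_of_int M\<bar> * 2 powr real_of_int e" using g by (simp add: abs_mult)
    also have "\<dots> \<le> \<bar>real_of_int M\<bar> * (2 powr real_of_int E / 2)"
      using ee by (intro mult_left_mono) auto
    also have "\<dots> \<le> real_of_int (2 ^ p - 1) * (2 powr real_of_int E / 2)"
    proof (rule mult_right_mono)
      have "\<bar>M\<bar> \<le> 2 ^ p - 1" using g(2) by linarith
      thus "\<bar>real_of_int M\<bar> \<le> real_of_int (2 ^ p - 1)" by (metis of_int_abs of_int_le_iff)
    qed (use pE in auto)
    also have "\<dots> < real_of_int (2 ^ p) * (2 powr real_of_int E / 2)"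
      using pE by (intro mult_strict_right_mono) auto
    also have "real_of_int (2 ^ p) = 2 * real_of_int ((2::int) ^ (p - 1))"
      using assms(2) by (metis One_nat_def Suc_pred less_eq_Suc_le of_int_mult of_int_numeral power_Suc)
    also have "2 * real_of_int ((2::int) ^ (p - 1)) * (2 powr real_of_int E / 2)
        = real_of_int ((2::int) ^ (p - 1)) * 2 powr real_of_int E" by simp
    also have "\<dots> \<le> real_of_int m * 2 powr real_of_int E"
      using assms(1) pE by (intro mult_right_mono) auto
    finally show False using assms(4) by simp
  next
    case False
    hence le: "E \<le> e" by simp
    define K where "K = M * 2 ^ nat (e - E)"
    have gK: "g = real_of_int K * 2 powr real_of_int E"
      unfolding K_def g(1) using powr_int_split[OF le] by simp
    have "real_of_int m < real_of_int K" using assms(4) gK pE by simp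
    moreover have "real_of_int K < real_of_int (m + 1)" using assms(5) gK pE by simp
    ultimately have "m < K" "K < m + 1" by linarith+
    thus False by linarith
  qed
qed


lemma even_fp_norm:
  fixes m E :: int
  assumes "2 ^ (p - 1) \<le> m" "m < 2 ^ p" "p \<ge> 1"
  shows "even_fp p (real_of_int m * 2 powr real_of_int E) \<longleftrightarrow> even m"
proof
  assume "even_fp p (real_of_int m * 2 powr real_of_int E)"
  then obtain M e where Me: "real_of_int m * 2 powr real_of_int E = real_of_int M * 2 powr real_of_int e"
    "2 ^ (p - 1) \<le> \<bar>M\<bar>" "\<bar>M\<bar> < 2 ^ p" "even M"
    unfolding even_fp_def by blast
  have "(0::int) < 2^(p-1)" by simp
  hence "\<bar>m\<bar> = m" using assms(1) by linarith
  have "m = M" using \<open>\<bar>m\<bar> = m\<close> norm_unique[OF Me(1) _ _ Me(2,3) assms(3)] assms by auto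
  thus "even m" using Me(4) by simp
next
  assume "even m"
  show "even_fp p (real_of_int m * 2 powr real_of_int E)"
    unfolding even_fp_def
  proof (rule exI[of _ m], rule exI[of _ E])
    have "(0::int) < 2^(p-1)" by simp
    hence "\<bar>m\<bar> = m" using assms(1) by linarith
    thus "real_of_int m * 2 powr real_of_int E = real_of_int m * 2 powr real_of_int E \<and>
      2 ^ (p - 1) \<le> \<bar>m\<bar> \<and> \<bar>m\<bar> < 2 ^ p \<and> even m" using assms \<open>even m\<close> by simp
  qed
qed

lemma pow_split: "p \<ge> 1 \<Longrightarrow> (2::int) ^ p = 2 * 2 ^ (p - 1)"
  by (metis One_nat_def Suc_pred less_eq_Suc_le power_Suc)

lemma rnP_ex1_pos:
  fixes x :: real assumes "x > 0" "p \<ge> 2"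
  shows "\<exists>!f. rnP p x f"
proof -
  have p1: "p \<ge> 1" using assms by simp
  obtain E :: int where E: "2 ^ (p - 1) \<le> x / 2 powr real_of_int E" "x / 2 powr real_of_int E < 2 ^ p"
    using binade[OF assms(1), of p] p1 by auto
  have pE: "(2::real) powr real_of_int E > 0" by simp
  define m where "m = \<lfloor>x / 2 powr real_of_int E\<rfloor>"
  have m1: "2 ^ (p - 1) \<le> m"
  proof -
    have "real_of_int ((2::int) ^ (p - 1)) \<le> x / 2 powr real_of_int E" using E(1) by simp
    thus ?thesis unfolding m_def by (simp add: le_floor_iff)
  qed
  have m2: "m < 2 ^ p"
  proof -
    have "real_of_int m < real_of_int ((2::int) ^ p)" using E(2) unfolding m_def by (simp add: floor_less_iff)
    thus ?thesis by linarith
  qed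
  define c1 where "c1 = real_of_int m * 2 powr real_of_int E"
  define c2 where "c2 = real_of_int (m + 1) * 2 powr real_of_int E"
  have c1x: "c1 \<le> x"
  proof -
    have "real_of_int m \<le> x / 2 powr real_of_int E" unfolding m_def by simp
    thus ?thesis unfolding c1_def using pE by (simp add: pos_le_divide_eq)
  qed
  have xc2: "x < c2"
  proof -
    have "x / 2 powr real_of_int E < real_of_int (m + 1)" unfolding m_def by simp
    thus ?thesis unfolding c2_def using pE by (simp add: pos_divide_less_eq)
  qed
  have "(0::int) < 2^(p-1)" by simp
  hence mabs: "\<bar>m\<bar> = m" using m1 by linarith
  have fp1: "is_fp p c1" unfolding c1_def using m1 m2 p1 mabs by (intro fp_intro) auto
  have fp2: "is_fp p c2" unfolding c2_def
  proof (intro fp_intro[OF p1])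
    have "(0::int) < 2 ^ (p - 1)" by simp
    thus "\<bar>m + 1\<bar> \<le> 2 ^ p" using m1 m2 by linarith
  qed
  have gp: "g \<le> c1 \<or> c2 \<le> g" if "is_fp p g" for g
    using gap[OF m1 p1 that, of E] unfolding c1_def c2_def by (meson not_le)
  have c12: "c1 < c2" using c1x xc2 by simp
  define nr where "nr f \<longleftrightarrow> is_fp p f \<and> (\<forall>g. is_fp p g \<longrightarrow> \<bar>x - f\<bar> \<le> \<bar>x - g\<bar>)" for f
  have nr_cases: "f = c1 \<or> f = c2" if "nr f" for f
  proof -
    have "is_fp p f" "\<bar>x - f\<bar> \<le> \<bar>x - c1\<bar>" "\<bar>x - f\<bar> \<le> \<bar>x - c2\<bar>"
      using that fp1 fp2 unfolding nr_def by auto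
    thus ?thesis using gp[of f] c1x xc2 by auto
  qed
  have nr1: "nr c1" if "x - c1 \<le> c2 - x"
    unfolding nr_def
  proof (intro conjI allI impI fp1)
    fix g assume "is_fp p g"
    hence "g \<le> c1 \<or> c2 \<le> g" by (rule gp)
    thus "\<bar>x - c1\<bar> \<le> \<bar>x - g\<bar>" using c1x xc2 that by (elim disjE) (simp_all add: abs_if)
  qed
  have nr2: "nr c2" if "c2 - x \<le> x - c1"
    unfolding nr_def
  proof (intro conjI allI impI fp2)
    fix g assume "is_fp p g"
    hence "g \<le> c1 \<or> c2 \<le> g" by (rule gp)
    thus "\<bar>x - c2\<bar> \<le> \<bar>x - g\<bar>" using c1x xc2 that by (elim disjE) (simp_all add: abs_if)
  qed
  have rnP_nr: "rnP p x f \<longleftrightarrow> nr f \<and> ((\<forall>g. nr g \<longrightarrow> g = f) \<or> even_fp p f)" for f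
  proof -
    have "(is_fp p g \<and> \<bar>x - g\<bar> = \<bar>x - f\<bar>) \<longleftrightarrow> nr g" if "nr f" for g
      using that unfolding nr_def by (metis order_antisym)
    thus ?thesis unfolding rnP_def by (metis nr_def)
  qed
  have d1: "\<bar>x - c1\<bar> = x - c1" and d2: "\<bar>x - c2\<bar> = c2 - x" using c1x xc2 by auto
  consider "x - c1 < c2 - x" | "c2 - x < x - c1" | "x - c1 = c2 - x" by linarith
  then show ?thesis
  proof cases
    case 1
    have n1: "nr c1" using nr1 1 by simp
    have nn2: "\<not> nr c2" using 1 fp1 d1 d2 unfolding nr_def by fastforce
    have "rnP p x c1" unfolding rnP_nr using n1 nr_cases nn2 by blast
    moreover have "f = c1" if "rnP p x f" for f
      using that nr_cases nn2 unfolding rnP_nr by blast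
    ultimately show ?thesis by blast
  next
    case 2
    have n2: "nr c2" using nr2 2 by simp
    have nn1: "\<not> nr c1" using 2 fp2 d1 d2 unfolding nr_def by fastforce
    have "rnP p x c2" unfolding rnP_nr using n2 nr_cases nn1 by blast
    moreover have "f = c2" if "rnP p x f" for f
      using that nr_cases nn1 unfolding rnP_nr by blast
    ultimately show ?thesis by blast
  next
    case 3
    have n1: "nr c1" and n2: "nr c2" using 3 nr1 nr2 by auto
    have ev: "(even_fp p c1 \<and> \<not> even_fp p c2) \<or> (even_fp p c2 \<and> \<not> even_fp p c1)"
    proof (cases "m + 1 < 2 ^ p")
      case True
      have e1: "even_fp p c1 \<longleftrightarrow> even m" unfolding c1_def using even_fp_norm m1 m2 p1 by blast
      have e2: "even_fp p c2 \<longleftrightarrow> even (m + 1)" unfolding c2_def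
        using even_fp_norm[of p "m+1"] m1 True p1 by simp
      show ?thesis using e1 e2 by auto
    next
      case False
      hence mm: "m + 1 = 2 ^ p" using m2 by simp
      have e1: "even_fp p c1 \<longleftrightarrow> even m" unfolding c1_def using even_fp_norm m1 m2 p1 by blast
      have "odd m"
      proof -
        have "even ((2::int) ^ p)" using p1 by simp
        thus ?thesis using mm by (metis even_plus_one_iff)
      qed
      moreover have "even_fp p c2"
      proof -
        have "c2 = real_of_int ((2::int) ^ (p - 1)) * 2 powr real_of_int (E + 1)"
          unfolding c2_def mm using pow_split[OF p1] by (simp add: powr_add)
        moreover have "even ((2::int) ^ (p - 1))" using assms(2) by simp
        moreover have "((2::int) ^ (p - 1)) < 2 ^ p" using p1 by simp
        ultimately show ?thesis unfolding even_fp_def by fastforce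
      qed
      ultimately show ?thesis using e1 by auto
    qed
    have only: "f = c1 \<or> f = c2" if "rnP p x f" for f using that nr_cases unfolding rnP_nr by blast
    have neu: "\<not> (\<forall>g. nr g \<longrightarrow> g = f)" for f using n1 n2 c12 by (metis order_less_irrefl)
    show ?thesis
    proof (cases "even_fp p c1")
      case True
      hence "rnP p x c1" unfolding rnP_nr using n1 by blast
      moreover have "f = c1" if "rnP p x f" for f
        using that only neu ev True unfolding rnP_nr by blast
      ultimately show ?thesis by blast
    next
      case False
      hence "even_fp p c2" using ev by blast
      hence "rnP p x c2" unfolding rnP_nr using n2 by blast
      moreover have "f = c2" if "rnP p x f" for f
        using that only neu ev False unfolding rnP_nr by blast
      ultimately show ?thesis by blast
    qed
  qed
qed


lemma rnP_neg: "rnP p x f \<Longrightarrow> rnP p (-x) (-f)"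
proof -
  assume a: "rnP p x f"
  hence f: "is_fp p f" and n: "\<And>g. is_fp p g \<Longrightarrow> \<bar>x - f\<bar> \<le> \<bar>x - g\<bar>"
    and u: "(\<forall>g. is_fp p g \<and> \<bar>x - g\<bar> = \<bar>x - f\<bar> \<longrightarrow> g = f) \<or> even_fp p f"
    unfolding rnP_def by auto
  have "is_fp p (-f)" using f fp_neg by blast
  moreover have "\<bar>-x - -f\<bar> \<le> \<bar>-x - g\<bar>" if "is_fp p g" for g
  proof -
    have "is_fp p (-g)" using that fp_neg by blast
    from n[OF this] show ?thesis by (simp add: abs_minus_commute)
  qed
  moreover have "(\<forall>g. is_fp p g \<and> \<bar>-x - g\<bar> = \<bar>-x - -f\<bar> \<longrightarrow> g = -f) \<or> even_fp p (-f)"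
    using u
  proof
    assume uu: "\<forall>g. is_fp p g \<and> \<bar>x - g\<bar> = \<bar>x - f\<bar> \<longrightarrow> g = f"
    have "g = -f" if "is_fp p g" "\<bar>-x - g\<bar> = \<bar>-x - -f\<bar>" for g
    proof -
      have "is_fp p (-g)" using that fp_neg by blast
      moreover have "\<bar>x - -g\<bar> = \<bar>x - f\<bar>" using that(2) by (smt (verit))
      ultimately have "-g = f" using uu by blast
      thus ?thesis by simp
    qed
    thus ?thesis by blast
  next
    assume "even_fp p f" thus ?thesis using even_fp_neg by blast
  qed
  ultimately show ?thesis unfolding rnP_def by blast
qed

lemma rnP_ex1:
  assumes "p \<ge> 2" shows "\<exists>!f. rnP p x f"
proof -
  have zero: "\<exists>!f. rnP p 0 f"
  proof
    show "rnP p 0 0" unfolding rnP_def using fp_zero by auto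
    fix f assume "rnP p 0 f"
    hence "\<bar>0 - f\<bar> \<le> \<bar>0 - 0\<bar>" unfolding rnP_def using fp_zero by blast
    thus "f = 0" by simp
  qed
  consider "x > 0" | "x = 0" | "x < 0" by linarith
  thus ?thesis
  proof cases
    case 1 thus ?thesis using rnP_ex1_pos assms by blast
  next
    case 2 thus ?thesis using zero by simp
  next
    case 3
    then obtain f where f: "rnP p (-x) f" and uq: "\<And>g. rnP p (-x) g \<Longrightarrow> g = f"
      using rnP_ex1_pos[of "-x" p] assms by auto
    show ?thesis
    proof
      show "rnP p x (-f)" using rnP_neg[OF f] by simp
      fix g assume "rnP p x g"
      from rnP_neg[OF this] have "-g = f" using uq by blast
      thus "g = -f" by simp
    qed
  qed
qed

lemma RN_nearest:
  assumes "p \<ge> 2"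
  shows "is_fp p (RN p x)" "is_fp p g \<Longrightarrow> \<bar>x - RN p x\<bar> \<le> \<bar>x - g\<bar>"
proof -
  have "rnP p x (RN p x)" unfolding RN_rnP using theI'[OF rnP_ex1[OF assms]] .
  thus "is_fp p (RN p x)" "is_fp p g \<Longrightarrow> \<bar>x - RN p x\<bar> \<le> \<bar>x - g\<bar>" unfolding rnP_def by auto
qed

lemma RN_le_fp: "p \<ge> 2 \<Longrightarrow> is_fp p g \<Longrightarrow> x \<le> g \<Longrightarrow> RN p x \<le> g"
  using RN_nearest(2)[of p g x] by (smt (verit))

lemma RN_ge_fp: "p \<ge> 2 \<Longrightarrow> is_fp p g \<Longrightarrow> g \<le> x \<Longrightarrow> g \<le> RN p x"
  using RN_nearest(2)[of p g x] by (smt (verit))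

lemma RN_close: "p \<ge> 2 \<Longrightarrow> is_fp p g \<Longrightarrow> \<bar>x - g\<bar> \<le> d \<Longrightarrow> \<bar>RN p x - x\<bar> \<le> d"
  using RN_nearest(2)[of p g x] by (smt (verit))

lemma fp_pow2: "p \<ge> 1 \<Longrightarrow> is_fp p (2 powr real_of_int e)"
  using fp_intro[of p 1 e] by simp

lemma fp_one: "p \<ge> 1 \<Longrightarrow> is_fp p 1"
  using fp_pow2[of p 0] by simp

lemma fp_two: "p \<ge> 1 \<Longrightarrow> is_fp p 2"
  using fp_pow2[of p 1] by simp

lemma round_int: "\<exists>N::int. \<bar>Y - real_of_int N\<bar> \<le> 1/2 \<and> (0 \<le> Y \<longrightarrow> Y \<le> B \<longrightarrow> B = real_of_int Bi \<longrightarrow> 0 \<le> N \<and> N \<le> Bi)"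
proof (intro exI conjI impI)
  let ?N = "\<lfloor>Y + 1/2\<rfloor>"
  show "\<bar>Y - real_of_int ?N\<bar> \<le> 1/2" by linarith
  assume "0 \<le> Y" "Y \<le> B" "B = real_of_int Bi"
  thus "0 \<le> ?N" "?N \<le> Bi" by linarith+
qed


lemma close_fp_pos:
  fixes x :: real assumes "x > 0" "p \<ge> 2"
  shows "\<exists>g. is_fp p g \<and> \<bar>x - g\<bar> \<le> x / (2 ^ p + 1)"
proof -
  have p1: "p \<ge> 1" using assms by simp
  obtain E :: int where E: "2 ^ (p - 1) \<le> x / 2 powr real_of_int E" "x / 2 powr real_of_int E < 2 ^ p"
    using binade[OF assms(1), of p] p1 by auto
  define P where "P = (2::real) powr real_of_int E"
  have P: "P > 0" unfolding P_def by simp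
  define X where "X = x / P"
  have xX: "x = X * P" unfolding X_def using P by simp
  define V where "V = (2::real) ^ (p - 1)"
  have V: "V \<ge> 1" unfolding V_def by simp
  have pV: "(2::real) ^ p = 2 * V" unfolding V_def using p1
    by (metis One_nat_def Suc_pred less_eq_Suc_le power_Suc)
  have X1: "V \<le> X" using E unfolding X_def P_def V_def by auto
  have X2: "X < 2 * V" using E(2) unfolding X_def P_def pV[symmetric] by auto
  show ?thesis
  proof (cases "X \<le> V + 1/2")
    case True
    define g where "g = real_of_int ((2::int) ^ (p - 1)) * P"
    have fg: "is_fp p g" unfolding g_def P_def
      by (rule fp_intro[OF p1]) (simp add: power_increasing)
    have gV: "g = V * P" unfolding g_def V_def by simp
    have "(X - V) * (2 * V + 1) \<le> X"
    proof -
      have "X * (2 * V) \<le> (V + 1/2) * (2 * V)" using True V by (intro mult_right_mono) auto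
      thus ?thesis by (simp add: algebra_simps)
    qed
    hence "X - V \<le> X / (2 * V + 1)" using V by (simp add: pos_le_divide_eq)
    hence "(X - V) * P \<le> X / (2 * V + 1) * P" using P by (intro mult_right_mono) auto
    hence "\<bar>x - g\<bar> \<le> x / (2 ^ p + 1)" using X1 P unfolding xX gV pV
      by (simp add: algebra_simps abs_if)
    thus ?thesis using fg by blast
  next
    case False
    obtain N :: int where N: "\<bar>X - real_of_int N\<bar> \<le> 1/2" "0 \<le> N" "N \<le> 2 ^ p"
      using round_int[of X "2 ^ p" "2 ^ p"] X1 X2 V pV by auto
    define g where "g = real_of_int N * P"
    have fg: "is_fp p g" unfolding g_def P_def by (rule fp_intro[OF p1]) (use N in simp)
    have "1/2 \<le> X / (2 * V + 1)" using False V by (simp add: pos_le_divide_eq)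
    hence "\<bar>X - real_of_int N\<bar> \<le> X / (2 * V + 1)" using N(1) by linarith
    hence "\<bar>X - real_of_int N\<bar> * P \<le> X / (2 * V + 1) * P" using P
      by (intro mult_right_mono) auto
    moreover have "\<bar>x - g\<bar> = \<bar>X - real_of_int N\<bar> * P" unfolding xX g_def using P
      by (simp add: abs_mult flip: left_diff_distrib)
    ultimately have "\<bar>x - g\<bar> \<le> x / (2 ^ p + 1)" unfolding pV using xX by simp
    thus ?thesis using fg by blast
  qed
qed

lemma RN_rel:
  assumes "p \<ge> 2" shows "\<bar>RN p x - x\<bar> \<le> \<bar>x\<bar> / (2 ^ p + 1)"
proof -
  have "\<exists>g. is_fp p g \<and> \<bar>x - g\<bar> \<le> \<bar>x\<bar> / (2 ^ p + 1)"
  proof -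
    consider "x > 0" | "x = 0" | "x < 0" by linarith
    thus ?thesis
    proof cases
      case 1 thus ?thesis using close_fp_pos[OF _ assms] by auto
    next
      case 2 thus ?thesis using fp_zero by auto
    next
      case 3
      then obtain g where "is_fp p g" "\<bar>-x - g\<bar> \<le> -x / (2 ^ p + 1)"
        using close_fp_pos[OF _ assms, of "-x"] by auto
      moreover have "is_fp p (-g)" using calculation fp_neg by blast
      ultimately show ?thesis using 3 by (intro exI[of _ "-g"]) (auto simp: abs_minus_commute)
    qed
  qed
  thus ?thesis using RN_close[OF assms] by blast
qed

lemma RN_abs12:
  assumes "p \<ge> 2" "1 \<le> x" "x \<le> 2"
  shows "\<bar>RN p x - x\<bar> \<le> 1 / 2 ^ p"
proof -
  have p1: "p \<ge> 1" using assms by simp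
  define P where "P = (2::real) powr real_of_int (1 - int p)"
  have P: "P > 0" unfolding P_def by simp
  have PP: "P * 2 ^ p = 2"
  proof -
    have "P * 2 ^ p = 2 powr real_of_int (1 - int p) * 2 powr real_of_int (int p)"
      unfolding P_def by (simp add: powr_realpow)
    also have "\<dots> = 2 powr real_of_int (1 :: int)" by (simp only: powr_add[symmetric]) simp
    finally show ?thesis by simp
  qed
  define X where "X = x / P"
  have xX: "x = X * P" unfolding X_def using P by simp
  have "X \<le> 2 ^ p"
  proof -
    have "x \<le> 2 ^ p * P" using assms PP by (simp add: mult.commute)
    thus ?thesis unfolding X_def using P by (simp add: pos_divide_le_eq)
  qed
  moreover have "X \<ge> 0" unfolding X_def using P assms by simp
  ultimately obtain N :: int where N: "\<bar>X - real_of_int N\<bar> \<le> 1/2" "0 \<le> N" "N \<le> 2 ^ p"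
    using round_int[of X "2 ^ p" "2 ^ p"] by auto
  define g where "g = real_of_int N * P"
  have fg: "is_fp p g" unfolding g_def P_def by (rule fp_intro[OF p1]) (use N in simp)
  have "\<bar>x - g\<bar> = \<bar>X - real_of_int N\<bar> * P" unfolding xX g_def using P
    by (simp add: abs_mult flip: left_diff_distrib)
  also have "\<dots> \<le> 1/2 * P" using N(1) P by (intro mult_right_mono) auto
  also have "1/2 * P = 1 / 2 ^ p" using PP by (simp add: field_simps)
  finally show ?thesis using RN_close[OF assms(1) fg] by blast
qed


lemma sqrt_le_of_sq: "0 \<le> y \<Longrightarrow> a \<le> y^2 \<Longrightarrow> sqrt a \<le> y"
  by (metis real_sqrt_abs real_sqrt_le_mono abs_of_nonneg)

lemma sq_le_sqrt: "0 \<le> y \<Longrightarrow> y^2 \<le> a \<Longrightarrow> y \<le> sqrt a"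
  by (metis real_sqrt_abs real_sqrt_le_mono abs_of_nonneg)

lemma U_ineq:
  fixes u c b h k :: real
  assumes "0 < u" "1 \<le> c" "c^2 = 1 + u" "0 \<le> b" "h = sqrt (1 + b)" "k \<le> 1 + 2*u"
  shows "sqrt (1 + k*b + u) + u \<le> h * (c + u)"
proof -
  have h1: "h \<ge> 1" using assms by simp
  have h2: "h^2 = 1 + b" using assms by simp
  have eq: "(h*(c+u) - u)^2 - (1 + k*b + u) = (h - 1) * ((h+1)*((c+u)^2 - k) - 2*u*(c+u))"
    using h2 assms(3) by algebra
  have A: "(c+u)^2 - k \<ge> u*(c+u)"
  proof -
    have "u * c \<ge> u" using assms by simp
    thus ?thesis using assms(3,6) by (simp add: power2_eq_square algebra_simps)
  qed
  have "(h+1)*((c+u)^2 - k) \<ge> 2 * (u*(c+u))"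
    using A h1 assms by (intro mult_mono) auto
  hence "(h - 1) * ((h+1)*((c+u)^2 - k) - 2*u*(c+u)) \<ge> 0" using h1 by simp
  hence "1 + k*b + u \<le> (h*(c+u) - u)^2" using eq by simp
  moreover have "0 \<le> h*(c+u) - u"
  proof -
    have "c + u \<le> h*(c+u)" using mult_right_mono[of 1 h "c+u"] h1 assms(1,2) by simp
    thus ?thesis using assms(1,2) by linarith
  qed
  ultimately show ?thesis using sqrt_le_of_sq by fastforce
qed

definition Mb :: "real \<Rightarrow> real" where
  "Mb u = 1 - 3/2*u - 23/8*u^2 + 1/4*u^3"

lemma L_ineq:
  fixes u b h :: real
  assumes "0 < u" "u \<le> 1/4" "0 \<le> b" "h = sqrt (1 + b)"
  shows "Mb u * h \<le> sqrt (1 - u + b / (1+u)^2) - u"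
proof -
  have h1: "h \<ge> 1" using assms by simp
  have h2: "h^2 = 1 + b" using assms by simp
  define e where "e = h - 1"
  have e0: "e \<ge> 0" using h1 e_def by simp
  have pw: "u^2 \<le> 1/16" "u^3 \<le> 1/64" "u^4 \<le> 1/256" "u^5 \<le> 1/1024" "u^6 \<le> 1/4096" "u^7 \<le> 1/16384"
    using power_mono[OF assms(2), of 2] power_mono[OF assms(2), of 3] power_mono[OF assms(2), of 4]
      power_mono[OF assms(2), of 5] power_mono[OF assms(2), of 6] power_mono[OF assms(2), of 7] assms(1)
    by (auto simp: power_divide)
  have pz: "u^2 \<ge> 0" "u^3 \<ge> 0" "u^4 \<ge> 0" "u^5 \<ge> 0" "u^6 \<ge> 0" "u^7 \<ge> 0" using assms by auto
  define a0 where "a0 = 11/2 + 61/8*u - 593/64*u^2 - 575/32*u^3 - 333/64*u^4 + 21/16*u^5 - 1/16*u^6"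
  define a1 where "a1 = 16 + 23/2*u - 977/32*u^2 - 651/16*u^3 - 317/32*u^4 + 21/8*u^5 - 1/8*u^6"
  define a2 where "a2 = 1 + 17/2*u + 7/8*u^2 - 1425/64*u^3 - 727/32*u^4 - 301/64*u^5 + 21/16*u^6 - 1/16*u^7"
  have a0: "a0 \<ge> 0" unfolding a0_def using pw pz assms by linarith
  have a1: "a1 \<ge> 0" unfolding a1_def using pw pz assms by linarith
  have a2: "a2 \<ge> 0" unfolding a2_def using pw pz assms by linarith
  have eq: "(1-u)*(1+u)^2 + h^2 - 1 - (1+u)^2 * (Mb u * h + u)^2 = u^2*a0 + u^2*a1*e + u*a2*e^2"
    unfolding a0_def a1_def a2_def Mb_def e_def by algebra
  have "u^2*a0 + u^2*a1*e + u*a2*e^2 \<ge> 0" using a0 a1 a2 e0 assms by simp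
  hence "(1+u)^2 * (Mb u * h + u)^2 \<le> (1-u)*(1+u)^2 + b" using eq h2 by simp
  hence "(Mb u * h + u)^2 \<le> ((1-u)*(1+u)^2 + b) / (1+u)^2"
    using assms by (simp add: pos_le_divide_eq mult.commute)
  also have "\<dots> = 1 - u + b / (1+u)^2" using assms by (simp add: field_simps)
  finally have sq: "(Mb u * h + u)^2 \<le> 1 - u + b / (1+u)^2" .
  have "Mb u \<ge> 0" unfolding Mb_def using pw pz assms by linarith
  hence "Mb u * h + u \<ge> 0" using h1 assms by simp
  from sq_le_sqrt[OF this sq] show ?thesis by simp
qed

lemma c_lower:
  fixes u :: real assumes u: "0 \<le> u" "u \<le> 1/4"
  shows "1 + 1/2*u - 1/8*u^2 \<le> sqrt (1 + u)"
proof (rule sq_le_sqrt)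
  have "u*u \<le> u * (1/4)" using u by (intro mult_left_mono) auto
  hence "u^2 \<le> u * (1/4)" by (simp add: power2_eq_square)
  thus "0 \<le> 1 + 1/2*u - 1/8*u^2" using u by linarith
  have e: "(1 + 1/2*u - 1/8*u^2)^2 = 1 + u - 1/8*u^3 + 1/64*u^4" by algebra
  have "u^4 = u * u^3" by algebra
  also have "\<dots> \<le> 8 * u^3" using u by (intro mult_right_mono) auto
  finally have "u^4 \<le> 8 * u^3" .
  thus "(1 + 1/2*u - 1/8*u^2)^2 \<le> 1 + u" unfolding e by linarith
qed

lemma c_upper:
  fixes u :: real assumes u: "0 \<le> u" "u \<le> 1/4"
  shows "sqrt (1 + u) \<le> 1 + 1/2*u - 1/8*u^2 + 1/16*u^3"
proof (rule sqrt_le_of_sq)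
  have "u*u \<le> u * (1/4)" using u by (intro mult_left_mono) auto
  hence "u^2 \<le> u * (1/4)" by (simp add: power2_eq_square)
  moreover have "u^3 \<ge> 0" using u by simp
  ultimately show "0 \<le> 1 + 1/2*u - 1/8*u^2 + 1/16*u^3" using u by linarith
  have e: "(1 + 1/2*u - 1/8*u^2 + 1/16*u^3)^2 = 1 + u + 5/64*u^4 - 1/64*u^5 + 1/256*u^6" by algebra
  have "u^5 = u * u^4" by algebra
  also have "\<dots> \<le> 5 * u^4" using u by (intro mult_right_mono) auto
  finally have "u^5 \<le> 5 * u^4" .
  moreover have "u^6 \<ge> 0" using u by simp
  ultimately show "1 + u \<le> (1 + 1/2*u - 1/8*u^2 + 1/16*u^3)^2" unfolding e by linarith
qed

lemma R5_bound:
  assumes "0 \<le> u" "u \<le> 1/4" shows "R5 u \<le> 5/2 * u + 3/8 * u^2"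
proof -
  have c: "sqrt (1+u) \<le> 1 + 1/2*u - 1/8*u^2 + 1/16*u^3" using c_upper assms .
  have "(1 + 2*u) * sqrt (1+u) \<le> (1 + 2*u) * (1 + 1/2*u - 1/8*u^2 + 1/16*u^3)"
    using c assms by (intro mult_left_mono) auto
  moreover have "(1 + 2*u) * (1 + 1/2*u - 1/8*u^2 + 1/16*u^3) - 1 + 2*u^2 \<le> (5/2 * u + 3/8 * u^2) * (1+u)"
  proof -
    have e: "(5/2 * u + 3/8 * u^2) * (1+u) - ((1 + 2*u) * (1 + 1/2*u - 1/8*u^2 + 1/16*u^3) - 1 + 2*u^2)
       = 9/16 * u^3 - 1/8 * u^4" by algebra
    have "u^4 = u * u^3" by algebra
    also have "\<dots> \<le> 1 * u^3" using assms by (intro mult_right_mono) auto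
    finally have "u^4 \<le> u^3" by simp
    moreover have "u^3 \<ge> 0" using assms by simp
    ultimately show ?thesis using e by linarith
  qed
  ultimately have "(1 + 2*u) * sqrt (1+u) - 1 + 2*u^2 \<le> (5/2 * u + 3/8 * u^2) * (1+u)" by linarith
  moreover have "1 + u > 0" using assms by linarith
  ultimately show ?thesis unfolding R5_def by (simp only: pos_divide_le_eq)
qed


lemma main_core:
  fixes X z :: real
  assumes hp: "p \<ge> 2" and X: "X > 0" and z1: "\<bar>z\<bar> \<le> 1"
  defines "u \<equiv> 1 / 2 ^ p"
  shows "\<bar>RN p (X * RN p (sqrt (RN p (1 + (RN p z)^2)))) / (X * sqrt (1 + z^2)) - 1\<bar> \<le> R5 u"
proof -
  define r where "r = RN p z"
  define t where "t = RN p (1 + r^2)"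
  define s where "s = RN p (sqrt t)"
  define \<rho> where "\<rho> = RN p (X * s)"
  define w where "w = 1 / (2 ^ p + 1 :: real)"
  define b where "b = z^2"
  define h where "h = sqrt (1 + b)"
  define c where "c = sqrt (1 + u)"
  have p1: "p \<ge> 1" using hp by simp
  have P4: "(2::real) ^ p \<ge> 4"
  proof -
    have "(2::real) ^ 2 \<le> 2 ^ p" using hp by (intro power_increasing) auto
    thus ?thesis by simp
  qed
  have u0: "u > 0" unfolding u_def by simp
  have u4: "u \<le> 1/4" unfolding u_def using P4 by (simp add: divide_le_eq)
  have wu: "w = u / (1 + u)" unfolding w_def u_def by (simp add: field_simps)
  have w0: "w \<ge> 0" unfolding w_def by simp
  have wle: "w \<le> u" unfolding wu using u0 by (simp add: divide_le_eq)
  have uw: "u - w = u * w" unfolding wu using u0 by (simp add: field_simps)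
  have k: "(1 + w)^2 \<le> 1 + 2*u"
  proof -
    have "w * w \<le> 2 * u * w" using wle w0 u0 by (intro mult_right_mono) auto
    thus ?thesis using uw by (simp add: power2_eq_square algebra_simps)
  qed
  have omw: "1 - w = 1 / (1 + u)" unfolding wu using u0 by (simp add: field_simps)
  have q: "(1 - w)^2 = 1 / (1 + u)^2" unfolding omw by (simp add: power_divide)
  have rel: "\<bar>RN p a - a\<bar> \<le> w * \<bar>a\<bar>" for a
    using RN_rel[OF hp, of a] unfolding w_def by simp
  have fp1: "is_fp p 1" using fp_one p1 .
  have fpm1: "is_fp p (-1)" using fp1 fp_neg by blast
  have fp2: "is_fp p 2" using fp_two p1 .
  have za: "z \<le> 1" "-1 \<le> z" using z1 by linarith+
  have r1: "\<bar>r\<bar> \<le> 1"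
    using RN_le_fp[OF hp fp1 za(1)] RN_ge_fp[OF hp fpm1 za(2)] unfolding r_def by linarith
  have rz: "\<bar>r - z\<bar> \<le> w * \<bar>z\<bar>" using rel unfolding r_def .
  have ru: "\<bar>r\<bar> \<le> (1 + w) * \<bar>z\<bar>" using rz by (simp add: algebra_simps; linarith)
  have rl: "(1 - w) * \<bar>z\<bar> \<le> \<bar>r\<bar>" using rz by (simp add: algebra_simps; linarith)
  have r2u: "r^2 \<le> (1 + w)^2 * b"
  proof -
    have "\<bar>r\<bar>^2 \<le> ((1 + w) * \<bar>z\<bar>)^2" using ru by (intro power_mono) auto
    thus ?thesis unfolding b_def by (simp add: power_mult_distrib)
  qed
  have r2l: "b / (1 + u)^2 \<le> r^2"
  proof -
    have "((1 - w) * \<bar>z\<bar>)^2 \<le> \<bar>r\<bar>^2" using rl w0 wle u4 by (intro power_mono) auto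
    thus ?thesis unfolding b_def by (simp add: power_mult_distrib q)
  qed
  have r2le: "r^2 \<le> 1"
  proof -
    have "\<bar>r\<bar>^2 \<le> 1^2" using r1 by (intro power_mono) auto
    thus ?thesis by simp
  qed
  have t_err: "\<bar>t - (1 + r^2)\<bar> \<le> u" unfolding t_def u_def
    using RN_abs12[OF hp, of "1 + r^2"] r2le by simp
  have t1: "1 \<le> t" unfolding t_def using RN_ge_fp[OF hp fp1, of "1 + r^2"] by simp
  have t2: "t \<le> 2" unfolding t_def using RN_le_fp[OF hp fp2, of "1 + r^2"] r2le by simp
  have st1: "1 \<le> sqrt t" using t1 by simp
  have st2: "sqrt t \<le> 2"
    using sqrt_le_of_sq[of 2 t] t2 by simp
  have s_err: "\<bar>s - sqrt t\<bar> \<le> u" unfolding s_def u_def using RN_abs12[OF hp st1 st2] .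
  have s1: "1 \<le> s" unfolding s_def using RN_ge_fp[OF hp fp1 st1] .
  have rho_err: "\<bar>\<rho> - X * s\<bar> \<le> w * (X * s)" unfolding \<rho>_def using rel[of "X * s"] X s1 by simp
  have c1: "1 \<le> c" unfolding c_def using u0 by simp
  have c2: "c^2 = 1 + u" unfolding c_def using u0 by simp
  have b0: "0 \<le> b" unfolding b_def by simp
  have h1: "1 \<le> h" unfolding h_def using b0 by simp
  have "sqrt t \<le> sqrt (1 + (1 + w)^2 * b + u)" using t_err r2u by simp
  moreover have "sqrt (1 + (1 + w)^2 * b + u) + u \<le> h * (c + u)"
    using U_ineq[OF u0 c1 c2 b0 h_def k] .
  ultimately have s_up: "s \<le> h * (c + u)" using s_err by linarith
  have "\<rho> \<le> X * s * (1 + w)" using rho_err by (simp add: algebra_simps; linarith)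
  also have "\<dots> \<le> X * (h * (c + u)) * (1 + w)" using s_up X w0 by (intro mult_right_mono mult_left_mono) auto
  finally have rho_up: "\<rho> \<le> X * h * ((c + u) * (1 + w))" by (simp add: algebra_simps)
  have up_id: "(c + u) * (1 + w) = 1 + R5 u" unfolding R5_def wu c_def using u0
    by (simp add: field_simps) (simp add: algebra_simps power2_eq_square)
  have "1 - u + b / (1 + u)^2 \<le> t" using t_err r2l by linarith
  hence "sqrt (1 - u + b / (1 + u)^2) \<le> sqrt t" by simp
  hence s_lo1: "Mb u * h \<le> s" using L_ineq[OF u0 u4 b0 h_def] s_err by linarith
  define m where "m = 2 + u - 2*u^2 - (1 + 2*u) * c"
  have "(1 + 2*u) * (1 + 1/2*u - 1/8*u^2) \<le> (1 + 2*u) * c"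
    unfolding c_def using c_lower[of u] u0 u4 by (intro mult_left_mono) auto
  moreover have "(1 + 2*u) * (1 + 1/2*u - 1/8*u^2) = 1 + 5/2*u + 7/8*u^2 - 1/4*u^3" by algebra
  ultimately have mM: "m \<le> Mb u" unfolding m_def Mb_def by linarith
  have "m * h \<le> Mb u * h" using mM h1 by (intro mult_right_mono) auto
  hence s_lo: "m * h \<le> s" using s_lo1 by linarith
  have "X * (m * h) * (1 - w) \<le> X * s * (1 - w)"
    using s_lo X w0 wle u4 by (intro mult_right_mono mult_left_mono) auto
  also have "\<dots> \<le> \<rho>" using rho_err by (simp add: algebra_simps; linarith)
  finally have rho_lo: "X * h * (m * (1 - w)) \<le> \<rho>" by (simp add: algebra_simps)
  have lo_id: "m * (1 - w) = 1 - R5 u" unfolding R5_def m_def omw c_def using u0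
    by (simp add: field_simps)
  have Xh: "X * h > 0" using X h1 by simp
  have "\<rho> / (X * h) \<le> 1 + R5 u" using rho_up up_id Xh by (simp add: divide_le_eq mult.commute)
  moreover have "1 - R5 u \<le> \<rho> / (X * h)" using rho_lo lo_id Xh by (simp add: le_divide_eq mult.commute)
  ultimately have "\<bar>\<rho> / (X * h) - 1\<bar> \<le> R5 u" by linarith
  thus ?thesis unfolding \<rho>_def s_def t_def r_def h_def b_def .
qed


theorem theorem2:
  fixes p :: nat and emin emax :: int and x y :: real
  assumes hp: "p \<ge> 2"
    and hx: "is_float p emin emax x" and hy: "is_float p emin emax y"
    and hnz: "x \<noteq> 0 \<or> y \<noteq> 0"
    and hnuf: "let x' = (if \<bar>x\<bar> < \<bar>y\<bar> then y else x);
                   y' = (if \<bar>x\<bar> < \<bar>y\<bar> then x else y);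
                   r = RN p (y' / x'); t = RN p (1 + r^2); s = RN p (sqrt t)
               in no_uf_of p emin emax (y' / x')
                  \<and> no_uf_of p emin emax (1 + r^2)
                  \<and> no_uf_of p emin emax (sqrt t) \<and> no_uf_of p emin emax (\<bar>x'\<bar> * s)"
  shows "let u = (2::real) powr (- real p);
             x' = (if \<bar>x\<bar> < \<bar>y\<bar> then y else x);
             y' = (if \<bar>x\<bar> < \<bar>y\<bar> then x else y);
             r = RN p (y' / x'); t = RN p (1 + r^2); s = RN p (sqrt t);
             \<rho>2 = RN p (\<bar>x'\<bar> * s)
         in \<bar>\<rho>2 / sqrt (x^2 + y^2) - 1\<bar> \<le> R5 u \<and> R5 u \<le> 5/2 * u + 3/8 * u^2"
proof -
  define x' where "x' = (if \<bar>x\<bar> < \<bar>y\<bar> then y else x)"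
  define y' where "y' = (if \<bar>x\<bar> < \<bar>y\<bar> then x else y)"
  define u where "u = (2::real) powr (- real p)"
  have u: "u = 1 / 2 ^ p" unfolding u_def by (simp add: powr_minus powr_realpow divide_inverse)
  have P4: "(2::real) ^ p \<ge> 4"
  proof -
    have "(2::real) ^ 2 \<le> 2 ^ p" using hp by (intro power_increasing) auto
    thus ?thesis by simp
  qed
  have u0: "0 \<le> u" and u4: "u \<le> 1/4" unfolding u using P4 by (auto simp: divide_le_eq)
  have x'0: "x' \<noteq> 0" unfolding x'_def using hnz by auto
  have yx: "\<bar>y'\<bar> \<le> \<bar>x'\<bar>" unfolding x'_def y'_def by auto
  define z where "z = y' / x'"
  have z1: "\<bar>z\<bar> \<le> 1" unfolding z_def using yx x'0 by (simp add: abs_divide divide_le_eq)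
  have X: "\<bar>x'\<bar> > 0" using x'0 by simp
  have sq: "x^2 + y^2 = x'^2 * (1 + z^2)"
  proof -
    have "x^2 + y^2 = x'^2 + y'^2" unfolding x'_def y'_def by auto
    also have "\<dots> = x'^2 * (1 + z^2)" unfolding z_def using x'0 by (simp add: field_simps)
    finally show ?thesis .
  qed
  have sqr: "sqrt (x^2 + y^2) = \<bar>x'\<bar> * sqrt (1 + z^2)"
    unfolding sq by (simp add: real_sqrt_mult)
  have main: "\<bar>RN p (\<bar>x'\<bar> * RN p (sqrt (RN p (1 + (RN p z)^2)))) / (\<bar>x'\<bar> * sqrt (1 + z^2)) - 1\<bar> \<le> R5 u"
    using main_core[OF hp X z1] unfolding u .
  show ?thesis
    unfolding Let_def x'_def[symmetric] y'_def[symmetric] u_def[symmetric] z_def[symmetric] sqr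
    using main R5_bound[OF u0 u4] by simp
qed

end
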